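(* Let $n\ge 2$ and let $\Phi\subset\mathbb{R}^3$ be a root system of type $I_2(n)$ lying in a 2-dimensional subspace of $\mathbb{R}^3$, with unit simple roots $\alpha_1,\alpha_2$ (so $\alpha_1\cdot\alpha_2=-\cos\frac{\pi}{n}$). Let $P$ be the group generated under the geometric product by $\Phi\cup\{e_1e_2e_3\}$ and let $G=P\cap\mathrm{Cl}^+(3)$. Then $G$, regarded as a set of vectors in the 4-dimensional Euclidean space $(\mathrm{Cl}^+(3),(\cdot,\cdot))$, is a root system of type $I_2(n)\oplus I_2(n)$, and $\{\alpha_1\alpha_1,\ \alpha_1\alpha_2,\ \alpha_1e_1e_2e_3,\ \alpha_2e_1e_2e_3\}$ is a set of simple roots for it, with Cartan matrix $$\begin{pmatrix}2&-2\cos\frac{\pi}{n}&0&0\\-2\cos\frac{\pi}{n}&2&0&0\\0&0&2&-2\cos\frac{\pi}{n}\\0&0&-2\cos\frac{\pi}{n}&2\end{pmatrix}.$$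
   Context: $\mathrm{Cl}(3)$ is the real Clifford algebra of Euclidean $\mathbb{R}^3$ with orthonormal basis $e_1,e_2,e_3$ ($e_i^2=1$, $e_ie_j=-e_je_i$ for $i\neq j$); vectors of $\mathbb{R}^3$ are elements of $\mathrm{Cl}(3)$ and $e_1e_2e_3$ is the pseudoscalar (inversion). The even subalgebra $\mathrm{Cl}^+(3)$ is spanned by $1,e_2e_3,e_3e_1,e_1e_2$. Reversal $\tilde{\ }$ reverses the order of vector factors. The spinor inner product $(R_1,R_2)=\tfrac12(R_1\tilde R_2+R_2\tilde R_1)$ makes $\mathrm{Cl}^+(3)$ a 4D Euclidean space with orthonormal basis $1,e_2e_3,e_3e_1,e_1e_2$. A root system is a finite set $\Phi$ of nonzero vectors spanning its linear span, with $\Phi\cap\mathbb{R}\alpha=\{\pm\alpha\}$ and $s_\alpha(\Phi)=\Phi$ for all $\alpha\in\Phi$, where $s_\alpha(x)=x-2\frac{(x,\alpha)}{(\alpha,\alpha)}\alpha$. The Cartan matrix of simple roots $\beta_i$ is $A_{ij}=2(\beta_i,\beta_j)/(\beta_i,\beta_i)$. $I_2(n)$ is the rank-2 root system of the dihedral group of order $2n$; $I_2(n)\oplus I_2(n)$ is the union of two copies in mutually orthogonal planes. *)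

theory Defs
  imports "HOL-Analysis.Analysis"
begin

text \<open>A multivector of Cl(3) is given by its 8 coordinates with respect to the basis
  1, e1, e2, e3, e2e3, e3e1, e1e2, e1e2e3 (in this order).\<close>

datatype cl3 = Cl3 (cs: real) (c1: real) (c2: real) (c3: real)
                   (c23: real) (c31: real) (c12: real) (c123: real)

text \<open>The geometric product, determined by e_i e_i = 1 and e_i e_j = - e_j e_i (i \<noteq> j).\<close>

definition clmul :: "cl3 \<Rightarrow> cl3 \<Rightarrow> cl3" (infixl "\<odot>" 70) where
  "a \<odot> b = Cl3
     (cs a * cs b + c1 a * c1 b + c2 a * c2 b + c3 a * c3 b - c23 a * c23 b - c31 a * c31 b - c12 a * c12 b - c123 a * c123 b)
     (cs a * c1 b + c1 a * cs b - c2 a * c12 b + c3 a * c31 b - c23 a * c123 b - c31 a * c3 b + c12 a * c2 b - c123 a * c23 b)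
     (cs a * c2 b + c1 a * c12 b + c2 a * cs b - c3 a * c23 b + c23 a * c3 b - c31 a * c123 b - c12 a * c1 b - c123 a * c31 b)
     (cs a * c3 b - c1 a * c31 b + c2 a * c23 b + c3 a * cs b - c23 a * c2 b + c31 a * c1 b - c12 a * c123 b - c123 a * c12 b)
     (cs a * c23 b + c1 a * c123 b + c2 a * c3 b - c3 a * c2 b + c23 a * cs b - c31 a * c12 b + c12 a * c31 b + c123 a * c1 b)
     (cs a * c31 b - c1 a * c3 b + c2 a * c123 b + c3 a * c1 b + c23 a * c12 b + c31 a * cs b - c12 a * c23 b + c123 a * c2 b)
     (cs a * c12 b + c1 a * c2 b - c2 a * c1 b + c3 a * c123 b - c23 a * c31 b + c31 a * c23 b + c12 a * cs b + c123 a * c3 b)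
     (cs a * c123 b + c1 a * c23 b + c2 a * c31 b + c3 a * c12 b + c23 a * c1 b + c31 a * c2 b + c12 a * c3 b + c123 a * cs b)"

definition cl_one :: cl3 where "cl_one = Cl3 1 0 0 0 0 0 0 0"

definition pseudo :: cl3 where "pseudo = Cl3 0 0 0 0 0 0 0 1"

definition vec :: "real^3 \<Rightarrow> cl3" where
  "vec x = Cl3 0 (x$1) (x$2) (x$3) 0 0 0 0"

definition rev3 :: "cl3 \<Rightarrow> cl3" where
  "rev3 a = Cl3 (cs a) (c1 a) (c2 a) (c3 a) (- c23 a) (- c31 a) (- c12 a) (- c123 a)"

definition even_sub :: "cl3 set" where
  "even_sub = {a. c1 a = 0 \<and> c2 a = 0 \<and> c3 a = 0 \<and> c123 a = 0}"

text \<open>Spinor inner product (R1,R2) = 1/2 (R1 ~R2 + R2 ~R1) (its scalar part; on the even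
  subalgebra the value is a scalar).\<close>
definition spinor_ip :: "cl3 \<Rightarrow> cl3 \<Rightarrow> real" where
  "spinor_ip a b = (cs (a \<odot> rev3 b) + cs (b \<odot> rev3 a)) / 2"

text \<open>Coordinates of an even element w.r.t. the orthonormal basis 1, e2e3, e3e1, e1e2 of
  (Cl^+(3), spinor inner product): this identifies that Euclidean space with real^4.\<close>
definition to4 :: "cl3 \<Rightarrow> real^4" where
  "to4 a = vector [cs a, c23 a, c31 a, c12 a]"

lemma vector_4:
  "(vector [a, b, c, d] :: ('a::zero)^4) $ 1 = a"
  "(vector [a, b, c, d] :: ('a::zero)^4) $ 2 = b"
  "(vector [a, b, c, d] :: ('a::zero)^4) $ 3 = c"
  "(vector [a, b, c, d] :: ('a::zero)^4) $ 4 = d"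
  by (simp_all add: vector_def)

lemma spinor_ip_to4:
  assumes "a \<in> even_sub" "b \<in> even_sub"
  shows "spinor_ip a b = to4 a \<bullet> to4 b"
  using assms
  by (cases a; cases b)
     (simp add: spinor_ip_def clmul_def rev3_def to4_def even_sub_def inner_vec_def
        sum_4 vector_4)

inductive_set gen_group :: "cl3 set \<Rightarrow> cl3 set" for S where
  one: "cl_one \<in> gen_group S"
| gen: "s \<in> S \<Longrightarrow> g \<in> gen_group S \<Longrightarrow> s \<odot> g \<in> gen_group S"
| inv: "s \<in> S \<Longrightarrow> s \<odot> y = cl_one \<Longrightarrow> y \<odot> s = cl_one \<Longrightarrow> g \<in> gen_group S
          \<Longrightarrow> y \<odot> g \<in> gen_group S"

definition refl_along :: "'a::real_inner \<Rightarrow> 'a \<Rightarrow> 'a" where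
  "refl_along \<alpha> x = x - (2 * (x \<bullet> \<alpha>) / (\<alpha> \<bullet> \<alpha>)) *\<^sub>R \<alpha>"

definition root_system :: "'a::real_inner set \<Rightarrow> bool" where
  "root_system \<Phi> \<longleftrightarrow> finite \<Phi> \<and> 0 \<notin> \<Phi>
     \<and> (\<forall>\<alpha>\<in>\<Phi>. {x \<in> \<Phi>. \<exists>c::real. x = c *\<^sub>R \<alpha>} = {\<alpha>, - \<alpha>})
     \<and> (\<forall>\<alpha>\<in>\<Phi>. \<forall>x\<in>\<Phi>. refl_along \<alpha> x \<in> \<Phi>)"

definition simple_roots :: "'a::real_inner set \<Rightarrow> 'a set \<Rightarrow> bool" where
  "simple_roots \<Phi> \<Delta> \<longleftrightarrow> \<Delta> \<subseteq> \<Phi> \<and> independent \<Delta>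
     \<and> (\<forall>\<beta>\<in>\<Phi>. \<exists>c::'a \<Rightarrow> real. \<beta> = (\<Sum>\<delta>\<in>\<Delta>. c \<delta> *\<^sub>R \<delta>)
            \<and> ((\<forall>\<delta>\<in>\<Delta>. c \<delta> \<ge> 0) \<or> (\<forall>\<delta>\<in>\<Delta>. c \<delta> \<le> 0)))"

definition cartan :: "'a::real_inner list \<Rightarrow> nat \<Rightarrow> nat \<Rightarrow> real" where
  "cartan \<beta> i j = 2 * ((\<beta>!i) \<bullet> (\<beta>!j)) / ((\<beta>!i) \<bullet> (\<beta>!i))"

inductive_set dihedral_roots :: "'a::real_inner \<Rightarrow> 'a \<Rightarrow> 'a set" for a b where
  base_a: "a \<in> dihedral_roots a b"
| base_b: "b \<in> dihedral_roots a b"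
| refl_a: "x \<in> dihedral_roots a b \<Longrightarrow> refl_along a x \<in> dihedral_roots a b"
| refl_b: "x \<in> dihedral_roots a b \<Longrightarrow> refl_along b x \<in> dihedral_roots a b"

definition type_I2 :: "nat \<Rightarrow> 'a::real_inner set \<Rightarrow> bool" where
  "type_I2 n \<Psi> \<longleftrightarrow> (\<exists>a b. norm a = 1 \<and> norm b = 1 \<and> a \<bullet> b = - cos (pi / real n)
      \<and> \<Psi> = dihedral_roots a b)"

definition type_I2_sum :: "nat \<Rightarrow> 'a::real_inner set \<Rightarrow> bool" where
  "type_I2_sum n \<Psi> \<longleftrightarrow> (\<exists>\<Psi>1 \<Psi>2. \<Psi> = \<Psi>1 \<union> \<Psi>2 \<and> type_I2 n \<Psi>1 \<and> type_I2 n \<Psi>2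
      \<and> (\<forall>x\<in>span \<Psi>1. \<forall>y\<in>span \<Psi>2. x \<bullet> y = 0))"

definition cartan_I2I2 :: "nat \<Rightarrow> nat \<Rightarrow> nat \<Rightarrow> real" where
  "cartan_I2I2 n i j = (let c = - 2 * cos (pi / real n) in
     [[2, c, 0, 0], [c, 2, 0, 0], [0, 0, 2, c], [0, 0, c, 2]] ! i ! j)"

end

theory Submission
  imports Defs
begin

lemma clmul_assoc: "(a \<odot> b) \<odot> c = a \<odot> (b \<odot> c)"
  by (cases a; cases b; cases c) (simp add: clmul_def algebra_simps)

definition ev :: "real \<Rightarrow> real^3 \<Rightarrow> cl3" where
  "ev s B = Cl3 s 0 0 0 (B$1) (B$2) (B$3) 0"
definition od :: "real^3 \<Rightarrow> real \<Rightarrow> cl3" where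
  "od v t = Cl3 0 (v$1) (v$2) (v$3) 0 0 0 t"

lemma vec_od: "vec x = od x 0" by (simp add: vec_def od_def)

lemma mul_vec_ev: "vec x \<odot> ev s B = od (s *\<^sub>R x - cross3 x B) (x \<bullet> B)"
  by (simp add: vec_def ev_def od_def clmul_def cross_components inner_vec_def sum_3 algebra_simps)
lemma mul_vec_od: "vec x \<odot> od v t = ev (x \<bullet> v) (cross3 x v + t *\<^sub>R x)"
  by (simp add: vec_def ev_def od_def clmul_def cross_components inner_vec_def sum_3 algebra_simps)
lemma mul_ps_ev: "pseudo \<odot> ev s B = od (- B) s"
  by (simp add: pseudo_def ev_def od_def clmul_def)
lemma mul_ps_od: "pseudo \<odot> od v t = ev (- t) v"
  by (simp add: pseudo_def ev_def od_def clmul_def)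
lemma mul_vec_ps: "vec x \<odot> pseudo = ev 0 x"
  by (simp add: pseudo_def ev_def vec_def clmul_def)
lemma one_ev: "cl_one = ev 1 0" by (simp add: cl_one_def ev_def)
lemma mul_one_right: "a \<odot> cl_one = a" by (cases a) (simp add: cl_one_def clmul_def)
lemma mul_one_left: "cl_one \<odot> a = a" by (cases a) (simp add: cl_one_def clmul_def)


definition negps :: cl3 where "negps = Cl3 0 0 0 0 0 0 0 (-1)"
lemma mul_np_ev: "negps \<odot> ev s B = od B (- s)"
  by (simp add: negps_def ev_def od_def clmul_def)
lemma mul_np_od: "negps \<odot> od v t = ev t (- v)"
  by (simp add: negps_def ev_def od_def clmul_def)
lemma ps_np: "pseudo \<odot> negps = cl_one" by (simp add: pseudo_def negps_def cl_one_def clmul_def)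
lemma ev_even: "ev s B \<in> even_sub" by (simp add: ev_def even_sub_def)
lemma od_even: "od v t \<in> even_sub \<longleftrightarrow> v = 0 \<and> t = 0"
  by (auto simp: od_def even_sub_def vec_eq_iff forall_3)

definition E1 :: "real^4" where "E1 = vector [1, 0, 0, 0]"
definition emb :: "real^3 \<Rightarrow> real^4" where "emb x = vector [0, x$1, x$2, x$3]"

lemma to4_ev: "to4 (ev s B) = s *\<^sub>R E1 + emb B"
  by (simp add: to4_def ev_def E1_def emb_def vec_eq_iff forall_4 vector_4)
lemma emb_add: "emb (x + y) = emb x + emb y"
  by (simp add: emb_def vec_eq_iff forall_4 vector_4)
lemma emb_scale: "emb (c *\<^sub>R x) = c *\<^sub>R emb x"
  by (simp add: emb_def vec_eq_iff forall_4 vector_4)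
lemma emb_inner: "emb x \<bullet> emb y = x \<bullet> y"
  by (simp add: emb_def inner_vec_def sum_4 sum_3 vector_4)
lemma E1_inner: "E1 \<bullet> E1 = 1" "E1 \<bullet> emb x = 0" "emb x \<bullet> E1 = 0"
  by (simp_all add: emb_def E1_def inner_vec_def sum_4 vector_4)

definition circ :: "'a::real_vector \<Rightarrow> 'a \<Rightarrow> real \<Rightarrow> 'a" where
  "circ e f t = cos t *\<^sub>R e + sin t *\<^sub>R f"

definition th :: "nat \<Rightarrow> int \<Rightarrow> real" where
  "th n k = real_of_int k * pi / real n"

lemma circ_periodic: "circ e f (t + real_of_int m * (2*pi)) = circ e f t"
proof -
  have "cos (t + real_of_int m * (2*pi)) = cos t" "sin (t + real_of_int m * (2*pi)) = sin t"
    using cos_int_2pin[of m] sin_int_2pin[of m]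
    by (simp_all add: cos_add sin_add mult.commute)
  then show ?thesis by (simp add: circ_def)
qed

lemma th_add: "th n (a + b) = th n a + th n b" by (simp add: th_def add_divide_distrib algebra_simps)
lemma th_diff: "th n (a - b) = th n a - th n b" by (simp add: th_def diff_divide_distrib algebra_simps)
lemma th_n: "n > 0 \<Longrightarrow> th n (int n) = pi" by (simp add: th_def)
lemma th_0: "th n 0 = 0" by (simp add: th_def)

lemma circ_mod: assumes "n > 0" shows "circ e f (th n k) = circ e f (th n (k mod (2 * int n)))"
proof -
  have k: "k = k mod (2 * int n) + (2 * int n) * (k div (2 * int n))" by simp
  have "th n k = th n (k mod (2 * int n)) + real_of_int (k div (2 * int n)) * (2*pi)"
    using assms by (subst k, simp add: th_add th_def field_simps)
  then show ?thesis by (simp add: circ_periodic)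
qed

lemma circ_neg: assumes "n > 0" shows "circ e f (th n (k + int n)) = - circ e f (th n k)"
  using assms by (simp add: th_add th_n circ_def cos_add sin_add)

context
  fixes e f :: "'a::real_inner"
  assumes ee: "e \<bullet> e = 1" and ff: "f \<bullet> f = 1" and ef: "e \<bullet> f = 0"
begin

lemma circ_inner: "circ e f a \<bullet> circ e f b = cos (b - a)"
proof -
  have fe: "f \<bullet> e = 0" using ef by (simp add: inner_commute)
  show ?thesis
    by (simp add: circ_def inner_add_left inner_add_right ee ff ef fe cos_diff algebra_simps)
qed

lemma circ_norm: "norm (circ e f a) = 1"
  using circ_inner[of a a] by (simp add: norm_eq_sqrt_inner)

lemma circ_refl: "refl_along (circ e f a) (circ e f b) = circ e f (2 * a + pi - b)"
proof -
  have "refl_along (circ e f a) (circ e f b) = circ e f b - (2 * cos (a - b)) *\<^sub>R circ e f a"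
    using circ_inner[of a a] circ_inner[of a b] cos_minus[of "a - b"]
    by (simp add: refl_along_def inner_commute del: cos_minus)
  also have "\<dots> = circ e f (2 * a + pi - b)"
  proof -
    have e: "2 * a + pi - b = (2 * a - b) + pi" by simp
    have c: "cos (2 * a + pi - b) = cos b - 2 * cos (a - b) * cos a"
      unfolding e cos_periodic_pi cos_diff cos_double_cos sin_double
      by (simp add: power2_eq_square algebra_simps)
    have s: "sin (2 * a + pi - b) = sin b - 2 * cos (a - b) * sin a"
      unfolding e sin_periodic_pi sin_diff cos_diff cos_double_cos sin_double
      using sin_cos_squared_add[of a] by algebra
    show ?thesis unfolding circ_def c s by (simp add: algebra_simps)
  qed
  finally show ?thesis .
qed

lemma circ_refl_th: assumes "n > 0"
  shows "refl_along (circ e f (th n a)) (circ e f (th n b)) = circ e f (th n (2 * a + int n - b))"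
proof -
  have "th n (2 * a + int n - b) = 2 * th n a + pi - th n b"
    using assms by (simp add: th_def field_simps)
  then show ?thesis by (simp add: circ_refl)
qed

lemma dihedral_circ: assumes n: "n > 0"
  shows "dihedral_roots (circ e f 0) (circ e f (th n (int n - 1))) = circ e f ` range (th n)"
    (is "?D = ?C")
proof
  have a0: "circ e f 0 = circ e f (th n 0)" by (simp add: th_0)
  show "?D \<subseteq> ?C"
  proof
    fix x assume "x \<in> ?D"
    then show "x \<in> ?C"
    proof (induction rule: dihedral_roots.induct)
      case base_a then show ?case by (simp add: a0)
    next
      case base_b then show ?case by simp
    next
      case (refl_a x)
      then obtain k where "x = circ e f (th n k)" by auto
      then show ?case using circ_refl_th[OF n, of 0 k] by (simp add: a0)
    next
      case (refl_b x)
      then obtain k where "x = circ e f (th n k)" by auto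
      then show ?case using circ_refl_th[OF n, of "int n - 1" k] by simp
    qed
  qed
  define Q where "Q k \<longleftrightarrow> circ e f (th n k) \<in> ?D" for k
  have Qmod: "Q k \<longleftrightarrow> Q l" if "k mod (2 * int n) = l mod (2 * int n)" for k l
    unfolding Q_def using circ_mod[OF n, of e f k] circ_mod[OF n, of e f l] that by simp
  have Q0: "Q 0" unfolding Q_def using dihedral_roots.base_a[of "circ e f 0"] by (simp add: th_0)
  have Q1: "Q (int n - 1)" unfolding Q_def by (rule dihedral_roots.base_b)
  have ra: "refl_along (circ e f 0) (circ e f (th n k)) = circ e f (th n (int n - k))" for k
    using circ_refl_th[OF n, of 0 k] by (simp add: th_0)
  have rb: "refl_along (circ e f (th n (int n - 1))) (circ e f (th n k)) = circ e f (th n (3 * int n - 2 - k))" for k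
  proof -
    have "2 * (int n - 1) + int n - k = 3 * int n - 2 - k" by simp
    then show ?thesis using circ_refl_th[OF n, of "int n - 1" k] by metis
  qed
  have Qa: "Q (int n - k)" if "Q k" for k
  proof -
    have "refl_along (circ e f 0) (circ e f (th n k)) \<in> ?D"
      by (rule dihedral_roots.refl_a) (use that in \<open>simp add: Q_def\<close>)
    then show ?thesis unfolding Q_def ra .
  qed
  have Qb: "Q (3 * int n - 2 - k)" if "Q k" for k
  proof -
    have "refl_along (circ e f (th n (int n - 1))) (circ e f (th n k)) \<in> ?D"
      by (rule dihedral_roots.refl_b) (use that in \<open>simp add: Q_def\<close>)
    then show ?thesis unfolding Q_def rb .
  qed
  have Qp: "Q (k + 2)" if "Q k" for k
  proof -
    have "Q (int n - (3 * int n - 2 - k))" using Qa[OF Qb[OF that]] .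
    moreover have "(int n - (3 * int n - 2 - k)) mod (2 * int n) = (k + 2) mod (2 * int n)"
    proof -
      have "int n - (3 * int n - 2 - k) = (k + 2) + (- 1) * (2 * int n)" by simp
      then show ?thesis by (metis mod_mult_self1)
    qed
    ultimately show ?thesis using Qmod by blast
  qed
  have Qm: "Q (k - 2)" if "Q k" for k
  proof -
    have "Q (3 * int n - 2 - (int n - k))" using Qb[OF Qa[OF that]] .
    moreover have "(3 * int n - 2 - (int n - k)) mod (2 * int n) = (k - 2) mod (2 * int n)"
    proof -
      have "3 * int n - 2 - (int n - k) = (k - 2) + 2 * int n" by simp
      then show ?thesis by simp
    qed
    ultimately show ?thesis using Qmod by blast
  qed
  have Qstep: "Q (k0 + 2 * j)" if "Q k0" for k0 j
  proof (induction j rule: int_induct[where k = 0])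
    case base then show ?case using that by simp
  next
    case (step1 i) then show ?case using Qp[of "k0 + 2 * i"] by (simp add: algebra_simps)
  next
    case (step2 i) then show ?case using Qm[of "k0 + 2 * i"] by (simp add: algebra_simps)
  qed
  have Qall: "Q k" for k
  proof (cases "even k")
    case True
    then obtain j where "k = 2 * j" by blast
    then show ?thesis using Qstep[OF Q0, of j] by simp
  next
    case odd: False
    show ?thesis
    proof (cases "even (int n)")
      case True
      then have "even (k - (int n - 1))" using odd by simp
      then obtain j where "k - (int n - 1) = 2 * j" by blast
      then have "k = int n - 1 + 2 * j" by simp
      then show ?thesis using Qstep[OF Q1, of j] by simp
    next
      case False
      then have "even (int n - k)" using odd by simp
      then obtain j where "int n - k = 2 * j" by blast
      then have "Q (int n - k)" using Qstep[OF Q0, of j] by simp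
      then show ?thesis using Qa[of "int n - k"] by simp
    qed
  qed
  show "?C \<subseteq> ?D" using Qall unfolding Q_def by auto
qed

end

lemma th_gamma: "n \<ge> 2 \<Longrightarrow> th n (int n - 1) = pi - pi / real n"
  by (simp add: th_def field_simps)

lemma sin_gamma_pos: assumes "n \<ge> 2" shows "sin (th n (int n - 1)) > 0"
proof -
  have "pi / real n > 0" using assms by simp
  moreover have "pi / real n < pi" using assms by (simp add: divide_less_eq)
  ultimately show ?thesis unfolding th_gamma[OF assms] by (simp add: sin_gt_zero)
qed

lemma cos_gamma: assumes "n \<ge> 2" shows "cos (th n (int n - 1)) = - cos (pi / real n)"
  unfolding th_gamma[OF assms] by simp

lemma circ_pos_comb:
  assumes n: "n \<ge> 2"
  shows "\<exists>x y. circ e f (th n k) = x *\<^sub>R e + y *\<^sub>R circ e f (th n (int n - 1))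
              \<and> ((x \<ge> 0 \<and> y \<ge> 0) \<or> (x \<le> 0 \<and> y \<le> 0))"
proof -
  define g where "g = th n (int n - 1)"
  define k' where "k' = k mod (2 * int n)"
  have n0: "n > 0" using n by simp
  have k'b: "0 \<le> k'" "k' < 2 * int n" using n0 by (simp_all add: k'_def)
  define t where "t = th n k'"
  have ck: "circ e f (th n k) = circ e f t" unfolding t_def k'_def using circ_mod[OF n0] .
  have sg: "sin g > 0" unfolding g_def using sin_gamma_pos[OF n] .
  define x where "x = sin (g - t) / sin g"
  define y where "y = sin t / sin g"
  have eq: "circ e f t = x *\<^sub>R e + y *\<^sub>R circ e f g"
  proof -
    have "x + y * cos g = cos t" using sg unfolding x_def y_def
      by (simp add: field_simps sin_diff)
    moreover have "y * sin g = sin t" using sg unfolding y_def by simp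
    ultimately show ?thesis unfolding circ_def by (simp add: algebra_simps flip: scaleR_add_left)
  qed
  have tt: "t = real_of_int k' * pi / real n" unfolding t_def th_def ..
  have gg: "g = (real n - 1) * pi / real n" unfolding g_def th_def by simp
  have signs: "(sin (g - t) \<ge> 0 \<and> sin t \<ge> 0) \<or> (sin (g - t) \<le> 0 \<and> sin t \<le> 0)"
  proof (cases "k' \<le> int n - 1")
    case True
    then have kr: "real_of_int k' \<le> real n - 1" by linarith
    have "0 \<le> t" using k'b n0 unfolding tt by simp
    moreover have "t \<le> g" unfolding tt gg using kr n0
      by (intro divide_right_mono mult_right_mono) auto
    moreover have "g \<le> pi" unfolding gg using n0 by (simp add: field_simps)
    ultimately show ?thesis by (simp add: sin_ge_zero)
  next
    case False
    then have kr: "real_of_int k' \<ge> real n" by linarith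
    have kr2: "real_of_int k' \<le> 2 * real n - 1" using k'b by linarith
    have "pi \<le> t" unfolding tt using kr n0 by (simp add: field_simps)
    moreover have "t - pi \<le> pi" unfolding tt using kr2 n0 by (simp add: field_simps)
    ultimately have s1: "sin t \<le> 0" using sin_ge_zero[of "t - pi"] by (simp add: sin_diff)
    have pk: "pi * real n \<le> pi * real_of_int k'" using kr by (simp add: mult_left_mono)
    have "t - g = (real_of_int k' - (real n - 1)) * pi / real n" unfolding tt gg
      using n0 by (simp add: field_simps)
    moreover have "(real_of_int k' - (real n - 1)) * pi / real n \<ge> 0"
      using kr n0 by (intro divide_nonneg_pos mult_nonneg_nonneg) auto
    ultimately have "0 \<le> t - g" by simp
    moreover have "t - g \<le> pi"
    proof -
      have "(real_of_int k' - (real n - 1)) * pi \<le> real n * pi" using kr2 by (intro mult_right_mono) auto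
      then have "(real_of_int k' - (real n - 1)) * pi / real n \<le> real n * pi / real n"
        by (intro divide_right_mono) auto
      then show ?thesis using \<open>t - g = _\<close> n0 by simp
    qed
    ultimately have "sin (t - g) \<ge> 0" by (simp add: sin_ge_zero)
    then have "sin (g - t) \<le> 0" using sin_minus[of "t - g"] by simp
    with s1 show ?thesis by simp
  qed
  have "(x \<ge> 0 \<and> y \<ge> 0) \<or> (x \<le> 0 \<and> y \<le> 0)"
    using signs sg unfolding x_def y_def
    by (auto simp: divide_nonneg_pos divide_nonpos_pos)
  then show ?thesis using eq ck unfolding g_def by (intro exI[of _ x] exI[of _ y]) simp
qed

lemma circ_finite: "n > 0 \<Longrightarrow> finite (circ e f ` range (th n))"
proof -
  assume n: "n > 0"
  have "circ e f ` range (th n) \<subseteq> (\<lambda>k. circ e f (th n k)) ` {0..<2 * int n}"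
  proof
    fix x assume "x \<in> circ e f ` range (th n)"
    then obtain k where "x = circ e f (th n k)" by auto
    then have "x = circ e f (th n (k mod (2 * int n)))" using circ_mod[OF n] by simp
    moreover have "k mod (2 * int n) \<in> {0..<2 * int n}" using n by simp
    ultimately show "x \<in> (\<lambda>k. circ e f (th n k)) ` {0..<2 * int n}" by blast
  qed
  then show ?thesis by (rule finite_subset) simp
qed

locale four =
  fixes e1 f1 e2 f2 :: "'a::real_inner" and n :: nat
  assumes n2: "n \<ge> 2"
    and o1: "e1 \<bullet> e1 = 1" "f1 \<bullet> f1 = 1" "e1 \<bullet> f1 = 0"
    and o2: "e2 \<bullet> e2 = 1" "f2 \<bullet> f2 = 1" "e2 \<bullet> f2 = 0"
    and o12: "e1 \<bullet> e2 = 0" "e1 \<bullet> f2 = 0" "f1 \<bullet> e2 = 0" "f1 \<bullet> f2 = 0"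
begin

abbreviation "C1 \<equiv> circ e1 f1 ` range (th n)"
abbreviation "C2 \<equiv> circ e2 f2 ` range (th n)"
abbreviation "g \<equiv> th n (int n - 1)"

lemma n0: "n > 0" using n2 by simp

lemma cross0: "circ e1 f1 a \<bullet> circ e2 f2 b = 0" "circ e2 f2 b \<bullet> circ e1 f1 a = 0"
  using o12 by (simp_all add: circ_def inner_add_left inner_add_right inner_commute)

lemma norm1: "norm (circ e1 f1 a) = 1" "norm (circ e2 f2 a) = 1"
  using circ_norm[OF o1] circ_norm[OF o2] by auto

lemma negC: "- circ e f (th n k) = circ e f (th n (k + int n))"
  using circ_neg[OF n0, of e f k] by (rule sym)

lemma inC: "circ e f (th n k) \<in> circ e f ` range (th n)" by simp

lemma root_sys: "root_system (C1 \<union> C2)"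
  unfolding root_system_def
proof (intro conjI ballI)
  show "finite (C1 \<union> C2)" using circ_finite[OF n0, of e1 f1] circ_finite[OF n0, of e2 f2] by simp
  show "0 \<notin> C1 \<union> C2" using norm1 by (auto simp del: norm_eq_zero dest: arg_cong[where f = norm])
next
  fix \<alpha> assume a: "\<alpha> \<in> C1 \<union> C2"
  have na: "norm \<alpha> = 1" using a norm1 by auto
  have ma: "- \<alpha> \<in> C1 \<union> C2" using a negC by auto
  show "{x \<in> C1 \<union> C2. \<exists>c::real. x = c *\<^sub>R \<alpha>} = {\<alpha>, - \<alpha>}"
  proof
    show "{\<alpha>, - \<alpha>} \<subseteq> {x \<in> C1 \<union> C2. \<exists>c::real. x = c *\<^sub>R \<alpha>}"
      using a ma by (auto intro: exI[of _ 1] exI[of _ "-1"])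
    show "{x \<in> C1 \<union> C2. \<exists>c::real. x = c *\<^sub>R \<alpha>} \<subseteq> {\<alpha>, - \<alpha>}"
    proof
      fix x assume "x \<in> {x \<in> C1 \<union> C2. \<exists>c::real. x = c *\<^sub>R \<alpha>}"
      then obtain c where x: "x \<in> C1 \<union> C2" "x = c *\<^sub>R \<alpha>" by auto
      have "norm x = 1" using x(1) norm1 by auto
      then have "\<bar>c\<bar> = 1" using x(2) na by simp
      then have "c = 1 \<or> c = -1" by linarith
      then show "x \<in> {\<alpha>, - \<alpha>}" using x(2) by auto
    qed
  qed
next
  fix \<alpha> x assume a: "\<alpha> \<in> C1 \<union> C2" and x: "x \<in> C1 \<union> C2"
  show "refl_along \<alpha> x \<in> C1 \<union> C2"
  proof -
    obtain k where "\<alpha> = circ e1 f1 (th n k) \<or> \<alpha> = circ e2 f2 (th n k)" using a by auto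
    moreover obtain l where "x = circ e1 f1 (th n l) \<or> x = circ e2 f2 (th n l)" using x by auto
    ultimately show ?thesis
    proof (elim disjE)
      assume "\<alpha> = circ e1 f1 (th n k)" "x = circ e1 f1 (th n l)"
      then show ?thesis using circ_refl_th[OF o1 n0] by simp
    next
      assume "\<alpha> = circ e2 f2 (th n k)" "x = circ e2 f2 (th n l)"
      then show ?thesis using circ_refl_th[OF o2 n0] by simp
    next
      assume "\<alpha> = circ e1 f1 (th n k)" "x = circ e2 f2 (th n l)"
      then show ?thesis using cross0 x by (simp add: refl_along_def)
    next
      assume "\<alpha> = circ e2 f2 (th n k)" "x = circ e1 f1 (th n l)"
      then show ?thesis using cross0 x by (simp add: refl_along_def)
    qed
  qed
qed

lemma typeI2: "type_I2 n (circ e f ` range (th n))" if "e \<bullet> e = 1" "f \<bullet> f = 1" "e \<bullet> f = 0" 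
proof -
  have "circ e f 0 = e" by (simp add: circ_def)
  then have D: "circ e f ` range (th n) = dihedral_roots e (circ e f g)"
    using dihedral_circ[OF that n0] by simp
  have "e \<bullet> circ e f g = cos g" using that by (simp add: circ_def inner_add_right)
  then show ?thesis unfolding type_I2_def using cos_gamma[OF n2] that circ_norm[OF that]
    by (intro exI[of _ e] exI[of _ "circ e f g"]) (simp add: D norm_eq_sqrt_inner)
qed

lemma type_sum: "type_I2_sum n (C1 \<union> C2)"
  unfolding type_I2_sum_def
proof (intro exI conjI)
  show "C1 \<union> C2 = C1 \<union> C2" ..
  show "type_I2 n C1" using typeI2 o1 by simp
  show "type_I2 n C2" using typeI2 o2 by simp
  show "\<forall>x\<in>span C1. \<forall>y\<in>span C2. x \<bullet> y = 0"
  proof (intro ballI)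
    fix x y assume x: "x \<in> span C1" and y: "y \<in> span C2"
    have "orthogonal z y" if "z \<in> C1" for z
      by (rule orthogonal_to_span[OF y]) (use that cross0 in \<open>auto simp: orthogonal_def\<close>)
    then have "orthogonal y x"
      by (intro orthogonal_to_span[OF x]) (simp add: orthogonal_commute)
    then show "x \<bullet> y = 0" by (simp add: orthogonal_def inner_commute)
  qed
qed

end

context four begin

abbreviation "b2 \<equiv> circ e1 f1 g"
abbreviation "b4 \<equiv> circ e2 f2 g"

lemma sg: "sin g > 0" using sin_gamma_pos[OF n2] .

lemma inners:
  "e1 \<bullet> b2 = cos g" "b2 \<bullet> e1 = cos g" "b2 \<bullet> b2 = 1"
  "e2 \<bullet> b4 = cos g" "b4 \<bullet> e2 = cos g" "b4 \<bullet> b4 = 1"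
  "e1 \<bullet> e2 = 0" "e2 \<bullet> e1 = 0" "e1 \<bullet> b4 = 0" "b4 \<bullet> e1 = 0"
  "b2 \<bullet> e2 = 0" "e2 \<bullet> b2 = 0" "b2 \<bullet> b4 = 0" "b4 \<bullet> b2 = 0"
  "f1 \<bullet> b2 = sin g" "f2 \<bullet> b4 = sin g" "f1 \<bullet> e1 = 0" "f1 \<bullet> e2 = 0" "f1 \<bullet> b4 = 0"
  "f2 \<bullet> e1 = 0" "f2 \<bullet> e2 = 0" "f2 \<bullet> b2 = 0" "e1 \<bullet> e1 = 1" "e2 \<bullet> e2 = 1"
  using o1 o2 o12 by (simp_all add: circ_def inner_add_left inner_add_right inner_commute
      flip: power2_eq_square)

lemma distincts: "e1 \<noteq> b2" "e1 \<noteq> e2" "e1 \<noteq> b4" "b2 \<noteq> e2" "b2 \<noteq> b4" "e2 \<noteq> b4"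
proof -
  show "e1 \<noteq> b2" using inners sg by (metis less_irrefl)
  show "e1 \<noteq> e2" using inners by (metis zero_neq_one)
  show "e1 \<noteq> b4" using inners by (metis zero_neq_one)
  show "b2 \<noteq> e2" using inners sg by (metis less_irrefl)
  show "b2 \<noteq> b4" using inners sg by (metis less_irrefl)
  show "e2 \<noteq> b4" using inners sg by (metis less_irrefl)
qed

lemma dist_list: "distinct [e1, b2, e2, b4]" using distincts by auto

lemma sum4: "(\<Sum>v\<in>{e1, b2, e2, b4}. c v *\<^sub>R v) = c e1 *\<^sub>R e1 + c b2 *\<^sub>R b2 + c e2 *\<^sub>R e2 + c b4 *\<^sub>R b4"
  using distincts by (simp add: algebra_simps)

lemma indep: "independent {e1, b2, e2, b4}"
proof
  assume "dependent {e1, b2, e2, b4}"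
  then obtain c where c: "\<exists>v\<in>{e1, b2, e2, b4}. c v \<noteq> 0" "(\<Sum>v\<in>{e1, b2, e2, b4}. c v *\<^sub>R v) = 0"
    by (auto simp: dependent_finite)
  then have z: "c e1 *\<^sub>R e1 + c b2 *\<^sub>R b2 + c e2 *\<^sub>R e2 + c b4 *\<^sub>R b4 = 0" by (simp add: sum4)
  have i1: "f1 \<bullet> (c e1 *\<^sub>R e1 + c b2 *\<^sub>R b2 + c e2 *\<^sub>R e2 + c b4 *\<^sub>R b4) = c b2 * sin g"
    by (simp add: inner_add_right inners)
  have i2: "e1 \<bullet> (c e1 *\<^sub>R e1 + c b2 *\<^sub>R b2 + c e2 *\<^sub>R e2 + c b4 *\<^sub>R b4) = c e1 + c b2 * cos g"
    by (simp add: inner_add_right inners)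
  have i3: "f2 \<bullet> (c e1 *\<^sub>R e1 + c b2 *\<^sub>R b2 + c e2 *\<^sub>R e2 + c b4 *\<^sub>R b4) = c b4 * sin g"
    by (simp add: inner_add_right inners)
  have i4: "e2 \<bullet> (c e1 *\<^sub>R e1 + c b2 *\<^sub>R b2 + c e2 *\<^sub>R e2 + c b4 *\<^sub>R b4) = c e2 + c b4 * cos g"
    by (simp add: inner_add_right inners)
  have "c b2 = 0" "c b4 = 0" using i1 i3 z sg by auto
  moreover have "c e1 = 0" "c e2 = 0" using i2 i4 z calculation by auto
  ultimately show False using c(1) by auto
qed

lemma simple: "simple_roots (C1 \<union> C2) {e1, b2, e2, b4}"
  unfolding simple_roots_def
proof (intro conjI ballI)
  have e1C: "e1 = circ e1 f1 (th n 0)" "e2 = circ e2 f2 (th n 0)" by (simp_all add: circ_def th_0)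
  show "{e1, b2, e2, b4} \<subseteq> C1 \<union> C2" using e1C by auto
  show "independent {e1, b2, e2, b4}" by (rule indep)
next
  fix \<beta> assume "\<beta> \<in> C1 \<union> C2"
  then obtain k where "\<beta> = circ e1 f1 (th n k) \<or> \<beta> = circ e2 f2 (th n k)" by auto
  then show "\<exists>c. \<beta> = (\<Sum>\<delta>\<in>{e1, b2, e2, b4}. c \<delta> *\<^sub>R \<delta>) \<and>
          ((\<forall>\<delta>\<in>{e1, b2, e2, b4}. 0 \<le> c \<delta>) \<or> (\<forall>\<delta>\<in>{e1, b2, e2, b4}. c \<delta> \<le> 0))"
  proof
    assume b: "\<beta> = circ e1 f1 (th n k)"
    obtain x y where xy: "circ e1 f1 (th n k) = x *\<^sub>R e1 + y *\<^sub>R b2"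
      "(x \<ge> 0 \<and> y \<ge> 0) \<or> (x \<le> 0 \<and> y \<le> 0)" using circ_pos_comb[OF n2] by blast
    define c where "c v = (if v = e1 then x else if v = b2 then y else 0)" for v
    have "c e1 = x" "c b2 = y" "c e2 = 0" "c b4 = 0" using distincts by (auto simp: c_def)
    then show ?thesis using xy b by (intro exI[of _ c]) (auto simp: sum4)
  next
    assume b: "\<beta> = circ e2 f2 (th n k)"
    obtain x y where xy: "circ e2 f2 (th n k) = x *\<^sub>R e2 + y *\<^sub>R b4"
      "(x \<ge> 0 \<and> y \<ge> 0) \<or> (x \<le> 0 \<and> y \<le> 0)" using circ_pos_comb[OF n2] by blast
    define c where "c v = (if v = e2 then x else if v = b4 then y else 0)" for v
    have "c e1 = 0" "c b2 = 0" "c e2 = x" "c b4 = y" using distincts by (auto simp: c_def)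
    then show ?thesis using xy b by (intro exI[of _ c]) (auto simp: sum4)
  qed
qed

lemma cartan_ok: "\<forall>i<4. \<forall>j<4. cartan [e1, b2, e2, b4] i j = cartan_I2I2 n i j"
proof (intro allI impI)
  fix i j :: nat assume "i < 4" "j < 4"
  then have "i \<in> {0,1,2,3}" "j \<in> {0,1,2,3}" by auto
  then show "cartan [e1, b2, e2, b4] i j = cartan_I2I2 n i j"
    using cos_gamma[OF n2]
    by (auto simp: cartan_def cartan_I2I2_def Let_def inners)
qed

end

locale frame =
  fixes u w :: "real^3"
  assumes uu: "u \<bullet> u = 1" and ww: "w \<bullet> w = 1" and uw: "u \<bullet> w = 0"
begin

abbreviation "N \<equiv> cross3 u w"
abbreviation "R \<equiv> circ u w"
abbreviation "rot t \<equiv> ev (cos t) (sin t *\<^sub>R N)"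
abbreviation "V t \<equiv> vec (R t)"
abbreviation "VI t \<equiv> ev 0 (R t)"
abbreviation "rotI t \<equiv> od (- (sin t *\<^sub>R N)) (cos t)"

lemma wu: "w \<bullet> u = 0" using uw by (simp add: inner_commute)

lemma NN: "N \<bullet> N = 1"
  using norm_cross_dot[of u w] uu ww uw by (simp add: norm_eq_sqrt_inner power2_eq_square)

lemma uN: "u \<bullet> N = 0" "w \<bullet> N = 0" "N \<bullet> u = 0" "N \<bullet> w = 0"
  using dot_cross_self[of u w] by (simp_all add: inner_commute)

lemma RN: "R a \<bullet> N = 0"
  by (simp add: circ_def inner_add_left uN)

lemma RxN: "cross3 (R a) N = sin a *\<^sub>R u - cos a *\<^sub>R w"
proof -
  have "cross3 u N = - w" using Lagrange[of u u w] uu uw by simp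
  moreover have "cross3 w N = u" using Lagrange[of w u w] ww wu by simp
  ultimately show ?thesis
    by (simp add: circ_def cross_add_left cross_mult_left algebra_simps)
qed

lemma RxR: "cross3 (R a) (R b) = sin (b - a) *\<^sub>R N"
proof -
  have "cross3 w u = - N" using cross_skew[of w u] by simp
  then show ?thesis
    by (simp add: circ_def cross_add_left cross_add_right cross_mult_left cross_mult_right
        sin_diff algebra_simps)
qed

lemma RR: "R a \<bullet> R b = cos (b - a)" using circ_inner[OF uu ww uw] .

lemma M1: "vec (R a) \<odot> rot t = V (a + t)"
proof -
  have "cos t *\<^sub>R R a - cross3 (R a) (sin t *\<^sub>R N) = R (a + t)"
    unfolding cross_mult_right RxN by (simp add: circ_def cos_add sin_add algebra_simps)
  then show ?thesis using mul_vec_ev[of "R a" "cos t" "sin t *\<^sub>R N"] by (simp add: RN flip: vec_od)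
qed

lemma M2: "vec (R a) \<odot> V b = rot (b - a)"
  by (simp add: vec_od[of "R b"] mul_vec_od RR RxR)

lemma M3: "vec (R a) \<odot> VI b = rotI (b - a)"
  by (simp add: mul_vec_ev RR RxR)

lemma M4: "vec (R a) \<odot> rotI t = VI (a + t)"
proof -
  have "cross3 (R a) (- (sin t *\<^sub>R N)) + cos t *\<^sub>R R a = R (a + t)"
    unfolding cross_minus_right cross_mult_right RxN by (simp add: circ_def cos_add sin_add algebra_simps)
  then show ?thesis by (simp add: mul_vec_od RN)
qed

lemma P1: "pseudo \<odot> rot t = rotI t" by (simp add: mul_ps_ev)
lemma P2: "pseudo \<odot> V a = VI a" by (simp add: vec_od mul_ps_od)
lemma P3: "pseudo \<odot> VI a = vec (- R a)" by (simp add: vec_od mul_ps_ev)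
lemma P4: "pseudo \<odot> rotI t = rot (t + pi)" by (simp add: mul_ps_od)
lemma Q1: "negps \<odot> rot t = rotI (t + pi)" by (simp add: mul_np_ev)
lemma Q2: "negps \<odot> V a = VI (a + pi)"
proof -
  have "- R a = R (a + pi)" by (simp add: circ_def)
  then show ?thesis by (simp add: vec_od mul_np_od)
qed
lemma Q3: "negps \<odot> VI a = V a" by (simp add: vec_od mul_np_ev)
lemma Q4: "negps \<odot> rotI t = rot t" by (simp add: mul_np_od)

lemma vv: "x \<bullet> x = 1 \<Longrightarrow> vec x \<odot> vec x = cl_one"
  using mul_vec_od[of x x 0] by (simp add: one_ev flip: vec_od)

end

locale frame_n = frame +
  fixes n :: nat
  assumes n2: "n \<ge> 2"
begin

abbreviation "\<Theta> \<equiv> range (th n)"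
abbreviation "T \<equiv> rot ` \<Theta> \<union> V ` \<Theta> \<union> VI ` \<Theta> \<union> rotI ` \<Theta>"
abbreviation "S \<equiv> vec ` (R ` \<Theta>) \<union> {pseudo}"

lemma n0: "n > 0" using n2 by simp

lemma Th_add: "a \<in> \<Theta> \<Longrightarrow> b \<in> \<Theta> \<Longrightarrow> a + b \<in> \<Theta>"
  by (auto simp flip: th_add)
lemma Th_diff: "a \<in> \<Theta> \<Longrightarrow> b \<in> \<Theta> \<Longrightarrow> b - a \<in> \<Theta>"
  by (auto simp flip: th_diff)
lemma Th_pi: "a \<in> \<Theta> \<Longrightarrow> a + pi \<in> \<Theta>"
proof -
  assume "a \<in> \<Theta>"
  then obtain k where "a = th n k" by auto
  then have "a + pi = th n (k + int n)" using th_n[OF n0] by (simp add: th_add)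
  then show ?thesis by simp
qed
lemma Th_0: "0 \<in> \<Theta>" using th_0[of n] by (metis rangeI)

lemma negR: "vec (- R a) = V (a + pi)"
proof -
  have "- R a = R (a + pi)" by (simp add: circ_def)
  then show ?thesis by simp
qed

lemma inT: "t \<in> \<Theta> \<Longrightarrow> rot t \<in> T" "t \<in> \<Theta> \<Longrightarrow> V t \<in> T"
  "t \<in> \<Theta> \<Longrightarrow> VI t \<in> T" "t \<in> \<Theta> \<Longrightarrow> rotI t \<in> T"
  by blast+

lemma Tcases:
  assumes "x \<in> T"
  obtains (a) t where "t \<in> \<Theta>" "x = rot t" | (b) t where "t \<in> \<Theta>" "x = V t"
    | (c) t where "t \<in> \<Theta>" "x = VI t" | (d) t where "t \<in> \<Theta>" "x = rotI t"
  using assms by (elim UnE imageE; blast)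

lemma T_vec: assumes a: "a \<in> \<Theta>" and x: "x \<in> T" shows "vec (R a) \<odot> x \<in> T"
  using x
proof (cases rule: Tcases)
  case (a t) then show ?thesis using M1[of a t] inT(2)[OF Th_add[OF \<open>a \<in> \<Theta>\<close>]] by simp
next
  case (b t) then show ?thesis using M2[of a t] inT(1)[OF Th_diff[OF \<open>a \<in> \<Theta>\<close>]] by simp
next
  case (c t) then show ?thesis using M3[of a t] inT(4)[OF Th_diff[OF \<open>a \<in> \<Theta>\<close>]] by simp
next
  case (d t) then show ?thesis using M4[of a t] inT(3)[OF Th_add[OF \<open>a \<in> \<Theta>\<close>]] by simp
qed

lemma T_ps: assumes x: "x \<in> T" shows "pseudo \<odot> x \<in> T"
  using x
proof (cases rule: Tcases)
  case (a t) then show ?thesis using P1[of t] inT(4) by simp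
next
  case (b t) then show ?thesis using P2[of t] inT(3) by simp
next
  case (c t) then show ?thesis using P3[of t] negR[of t] inT(2)[OF Th_pi] by simp
next
  case (d t) then show ?thesis using P4[of t] inT(1)[OF Th_pi] by simp
qed

lemma T_np: assumes x: "x \<in> T" shows "negps \<odot> x \<in> T"
  using x
proof (cases rule: Tcases)
  case (a t) then show ?thesis using Q1[of t] inT(4)[OF Th_pi] by simp
next
  case (b t) then show ?thesis using Q2[of t] inT(3)[OF Th_pi] by simp
next
  case (c t) then show ?thesis using Q3[of t] inT(2) by simp
next
  case (d t) then show ?thesis using Q4[of t] inT(1) by simp
qed

lemma inv_vec: assumes "y \<odot> vec x = cl_one" "x \<bullet> x = 1" shows "y = vec x"
proof -
  have "y = y \<odot> (vec x \<odot> vec x)" using vv[OF assms(2)] by (simp add: mul_one_right)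
  also have "\<dots> = vec x" by (simp add: clmul_assoc[symmetric] assms(1) mul_one_left)
  finally show ?thesis .
qed

lemma inv_ps: assumes "y \<odot> pseudo = cl_one" shows "y = negps"
proof -
  have "y = y \<odot> (pseudo \<odot> negps)" using ps_np by (simp add: mul_one_right)
  also have "\<dots> = negps" by (simp add: clmul_assoc[symmetric] assms(1) mul_one_left)
  finally show ?thesis .
qed

lemma RR1: "R a \<bullet> R a = 1" using RR[of a a] by simp

lemma gen_sub: "gen_group S \<subseteq> T"
proof
  fix x assume "x \<in> gen_group S"
  then show "x \<in> T"
  proof (induction rule: gen_group.induct)
    case one
    have "cl_one = rot 0" by (simp add: one_ev)
    then show ?case using Th_0 by blast
  next
    case (gen s g)
    from gen.hyps(1) show ?case
    proof
      assume "s \<in> vec ` R ` \<Theta>"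
      then obtain a where a: "a \<in> \<Theta>" "s = vec (R a)" by auto
      then show ?case using T_vec gen.IH by simp
    next
      assume "s \<in> {pseudo}"
      then show ?case using T_ps gen.IH by simp
    qed
  next
    case (inv s y g)
    from inv.hyps(1) show ?case
    proof
      assume "s \<in> vec ` R ` \<Theta>"
      then obtain a where a: "a \<in> \<Theta>" "s = vec (R a)" by auto
      then have "y = s" using inv_vec[OF _ RR1] inv.hyps(3) by blast
      then show ?case using T_vec a inv.IH by simp
    next
      assume "s \<in> {pseudo}"
      then have "y = negps" using inv_ps inv.hyps(3) by blast
      then show ?case using T_np inv.IH by simp
    qed
  qed
qed

lemma T_sub: "T \<subseteq> gen_group S"
proof -
  have Vin: "V a \<in> gen_group S" if "a \<in> \<Theta>" for a
    using gen_group.gen[OF _ gen_group.one, of "V a" S] that mul_one_right by auto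
  have rotin: "rot t \<in> gen_group S" if "t \<in> \<Theta>" for t
  proof -
    have "vec (R 0) \<odot> V t \<in> gen_group S"
      using gen_group.gen[OF _ Vin[OF that], of "vec (R 0)"] Th_0 by auto
    then show ?thesis using M2[of 0 t] by simp
  qed
  have VIin: "VI a \<in> gen_group S" if "a \<in> \<Theta>" for a
    using gen_group.gen[OF _ Vin[OF that], of pseudo] P2 by auto
  have rotIin: "rotI a \<in> gen_group S" if "a \<in> \<Theta>" for a
    using gen_group.gen[OF _ rotin[OF that], of pseudo] P1 by auto
  show ?thesis
    by (intro Un_least image_subsetI; (erule rotin | erule Vin | erule VIin | erule rotIin))
qed

lemma P_eq: "gen_group S = T" using gen_sub T_sub by blast

lemma N_nz: "N \<noteq> 0" using NN by auto

lemma G_eq: "T \<inter> even_sub = rot ` \<Theta> \<union> VI ` \<Theta>"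
proof -
  have "V a \<notin> even_sub" for a
  proof
    assume "V a \<in> even_sub"
    then have "R a = 0" by (simp add: vec_od od_even)
    then show False using RR1[of a] by simp
  qed
  moreover have "rotI a \<notin> even_sub" for a
  proof
    assume "rotI a \<in> even_sub"
    then have "sin a = 0" "cos a = 0" using N_nz by (auto simp: od_even)
    then show False using sin_cos_squared_add[of a] by simp
  qed
  ultimately have "V ` \<Theta> \<inter> even_sub = {}" "rotI ` \<Theta> \<inter> even_sub = {}" by auto
  moreover have "rot ` \<Theta> \<subseteq> even_sub" "VI ` \<Theta> \<subseteq> even_sub" using ev_even by auto
  ultimately show ?thesis by blast
qed

lemma to4_rot: "to4 (rot t) = circ E1 (emb N) t"
  by (simp add: to4_ev circ_def emb_scale)
lemma to4_VI: "to4 (VI t) = circ (emb u) (emb w) t"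
  by (simp add: to4_ev circ_def emb_scale emb_add)

lemma to4_G: "to4 ` (T \<inter> even_sub) = circ E1 (emb N) ` \<Theta> \<union> circ (emb u) (emb w) ` \<Theta>"
  unfolding G_eq image_Un by (simp add: image_image to4_rot to4_VI)

lemma four: "four E1 (emb N) (emb u) (emb w) n"
  by unfold_locales (simp_all add: n2 E1_inner emb_inner NN uu ww uw uN)

end

theorem mainTheorem4:
  fixes n :: nat and \<alpha>1 \<alpha>2 :: "real^3" and \<Phi> :: "(real^3) set"
    and P G :: "cl3 set" and \<beta> :: "(real^4) list"
  assumes "n \<ge> 2"
    and "norm \<alpha>1 = 1" and "norm \<alpha>2 = 1"
    and "\<alpha>1 \<bullet> \<alpha>2 = - cos (pi / real n)"
    and "\<Phi> = dihedral_roots \<alpha>1 \<alpha>2"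
    and "P = gen_group (vec ` \<Phi> \<union> {pseudo})"
    and "G = P \<inter> even_sub"
    and "\<beta> = [to4 (vec \<alpha>1 \<odot> vec \<alpha>1), to4 (vec \<alpha>1 \<odot> vec \<alpha>2),
              to4 (vec \<alpha>1 \<odot> pseudo), to4 (vec \<alpha>2 \<odot> pseudo)]"
  shows "root_system (to4 ` G) \<and> type_I2_sum n (to4 ` G)
       \<and> distinct \<beta> \<and> simple_roots (to4 ` G) (set \<beta>)
       \<and> (\<forall>i<4. \<forall>j<4. cartan \<beta> i j = cartan_I2I2 n i j)"
proof -
  note n2 = assms(1)
  have n0: "n > 0" using n2 by simp
  define c where "c = cos (pi / real n)"
  define s where "s = sin (pi / real n)"
  define g where "g = th n (int n - 1)"
  have sg: "sin g = s" unfolding g_def s_def th_gamma[OF n2] by simp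
  have cg: "cos g = - c" unfolding g_def c_def using cos_gamma[OF n2] by simp
  have spos: "s > 0" using sin_gamma_pos[OF n2] sg g_def by simp
  have cs: "c^2 + s^2 = 1" unfolding c_def s_def by simp
  define u where "u = \<alpha>1"
  define w where "w = (1 / s) *\<^sub>R (\<alpha>2 + c *\<^sub>R \<alpha>1)"
  have a11: "\<alpha>1 \<bullet> \<alpha>1 = 1" using assms(2) by (simp add: power2_norm_eq_inner[symmetric])
  have a22: "\<alpha>2 \<bullet> \<alpha>2 = 1" using assms(3) by (simp add: power2_norm_eq_inner[symmetric])
  have a12: "\<alpha>1 \<bullet> \<alpha>2 = - c" using assms(4) c_def by simp
  have a21: "\<alpha>2 \<bullet> \<alpha>1 = - c" using a12 by (simp add: inner_commute)
  have uu: "u \<bullet> u = 1" using a11 u_def by simp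
  have uw: "u \<bullet> w = 0" unfolding u_def w_def by (simp add: inner_add_right a11 a12)
  have ww: "w \<bullet> w = 1"
  proof -
    have e: "(\<alpha>2 + c *\<^sub>R \<alpha>1) \<bullet> (\<alpha>2 + c *\<^sub>R \<alpha>1) = 1 - c^2"
      by (simp add: inner_add_left inner_add_right a11 a12 a21 a22 power2_eq_square algebra_simps)
    have "w \<bullet> w = (1 / s)^2 * ((\<alpha>2 + c *\<^sub>R \<alpha>1) \<bullet> (\<alpha>2 + c *\<^sub>R \<alpha>1))"
      unfolding w_def by (simp add: power2_eq_square)
    then have "w \<bullet> w = (1 / s)^2 * (1 - c^2)" using e by simp
    also have "\<dots> = 1" using cs spos by (simp add: field_simps)
    finally show ?thesis .
  qed
  interpret frame_n u w n by unfold_locales (use uu uw ww n2 in auto)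
  have al1: "\<alpha>1 = R 0" unfolding u_def by (simp add: circ_def)
  have al2: "\<alpha>2 = R g" unfolding circ_def sg cg w_def u_def using spos by (simp add: algebra_simps)
  have Phi: "\<Phi> = R ` \<Theta>" using dihedral_circ[OF uu ww uw n0] assms(5) al1 al2 g_def by simp
  have Geq: "G = T \<inter> even_sub" using P_eq assms(6,7) Phi by simp
  have toG: "to4 ` G = circ E1 (emb N) ` \<Theta> \<union> circ (emb u) (emb w) ` \<Theta>" using to4_G Geq by simp
  interpret F: four E1 "emb N" "emb u" "emb w" n by (rule four)
  have b1: "to4 (vec \<alpha>1 \<odot> vec \<alpha>1) = E1" unfolding al1 M2 to4_rot by (simp add: circ_def)
  have b2: "to4 (vec \<alpha>1 \<odot> vec \<alpha>2) = circ E1 (emb N) g" unfolding al1 al2 M2 to4_rot by simp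
  have b3: "to4 (vec \<alpha>1 \<odot> pseudo) = emb u" unfolding mul_vec_ps al1 to4_VI by (simp add: circ_def)
  have b4: "to4 (vec \<alpha>2 \<odot> pseudo) = circ (emb u) (emb w) g" unfolding mul_vec_ps al2 to4_VI ..
  have beq: "\<beta> = [E1, circ E1 (emb N) g, emb u, circ (emb u) (emb w) g]"
    using assms(8) b1 b2 b3 b4 by simp
  show ?thesis unfolding toG beq g_def
    using F.root_sys F.type_sum F.dist_list F.simple F.cartan_ok by simp
qed

end
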